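(* For every $n\ge 4$, $W(n)\le \frac34 n+1$.
   Context: Graphs are finite simple graphs viewed as structures with adjacency relation $E$ and equality; $\chi(G)$ is the chromatic number and $K_3$ the complete graph on 3 vertices. For a graph $G$ with $\chi(G)>3$, $W(G)$ is the least $k$ such that some existential-positive first-order sentence (built from atomic formulas $x=y$, $E(x,y)$ using only $\wedge$, $\vee$ and $\exists$) in which at most $k$ distinct variables occur is true in $G$ and false in $K_3$. $W(n)=\max\{W(G): |V(G)|=n,\ \chi(G)>3\}$. *)

theory Defs
  imports Complex_Main
begin

definition simple_graph :: "'a set \<Rightarrow> ('a \<Rightarrow> 'a \<Rightarrow> bool) \<Rightarrow> bool" where
  "simple_graph V E \<longleftrightarrow> finite V \<and>
     (\<forall>x y. E x y \<longrightarrow> x \<in> V \<and> y \<in> V) \<and>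
     (\<forall>x y. E x y \<longrightarrow> E y x) \<and> (\<forall>x. \<not> E x x)"

definition proper_colouring :: "'a set \<Rightarrow> ('a \<Rightarrow> 'a \<Rightarrow> bool) \<Rightarrow> nat \<Rightarrow> ('a \<Rightarrow> nat) \<Rightarrow> bool" where
  "proper_colouring V E k c \<longleftrightarrow> (\<forall>x\<in>V. c x < k) \<and> (\<forall>x\<in>V. \<forall>y\<in>V. E x y \<longrightarrow> c x \<noteq> c y)"

definition chromatic_number :: "'a set \<Rightarrow> ('a \<Rightarrow> 'a \<Rightarrow> bool) \<Rightarrow> nat" where
  "chromatic_number V E = (LEAST k. \<exists>c. proper_colouring V E k c)"

definition K3_V :: "nat set" where "K3_V = {0, 1, 2}"
definition K3_E :: "nat \<Rightarrow> nat \<Rightarrow> bool" where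
  "K3_E x y \<longleftrightarrow> x \<in> K3_V \<and> y \<in> K3_V \<and> x \<noteq> y"

text \<open>Existential-positive first-order formulas over the signature {E} with equality;
  variables are named by natural numbers.\<close>

datatype epfm = Eq nat nat | Adj nat nat | Conj epfm epfm | Disj epfm epfm | Ex nat epfm

fun vars :: "epfm \<Rightarrow> nat set" where
  "vars (Eq x y) = {x, y}"
| "vars (Adj x y) = {x, y}"
| "vars (Conj p q) = vars p \<union> vars q"
| "vars (Disj p q) = vars p \<union> vars q"
| "vars (Ex x p) = insert x (vars p)"

fun fvars :: "epfm \<Rightarrow> nat set" where
  "fvars (Eq x y) = {x, y}"
| "fvars (Adj x y) = {x, y}"
| "fvars (Conj p q) = fvars p \<union> fvars q"
| "fvars (Disj p q) = fvars p \<union> fvars q"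
| "fvars (Ex x p) = fvars p - {x}"

definition sentence :: "epfm \<Rightarrow> bool" where
  "sentence p \<longleftrightarrow> fvars p = {}"

fun sat :: "'a set \<Rightarrow> ('a \<Rightarrow> 'a \<Rightarrow> bool) \<Rightarrow> (nat \<Rightarrow> 'a) \<Rightarrow> epfm \<Rightarrow> bool" where
  "sat V E s (Eq x y) \<longleftrightarrow> s x = s y"
| "sat V E s (Adj x y) \<longleftrightarrow> E (s x) (s y)"
| "sat V E s (Conj p q) \<longleftrightarrow> sat V E s p \<and> sat V E s q"
| "sat V E s (Disj p q) \<longleftrightarrow> sat V E s p \<or> sat V E s q"
| "sat V E s (Ex x p) \<longleftrightarrow> (\<exists>a\<in>V. sat V E (s(x := a)) p)"

definition holds :: "'a set \<Rightarrow> ('a \<Rightarrow> 'a \<Rightarrow> bool) \<Rightarrow> epfm \<Rightarrow> bool" where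
  "holds V E p \<longleftrightarrow> (\<forall>s. (\<forall>x. s x \<in> V) \<longrightarrow> sat V E s p)"

definition W_graph :: "'a set \<Rightarrow> ('a \<Rightarrow> 'a \<Rightarrow> bool) \<Rightarrow> nat" where
  "W_graph V E = (LEAST k. \<exists>p. sentence p \<and> card (vars p) \<le> k \<and>
       holds V E p \<and> \<not> holds K3_V K3_E p)"

text \<open>W(n): maximum of W(G) over n-vertex graphs with chromatic number > 3
  (every n-vertex graph is isomorphic to one on vertex set {..<n}).\<close>
definition W_num :: "nat \<Rightarrow> nat" where
  "W_num n = Max {W_graph V E | V E. V = {..<n} \<and> simple_graph V E \<and> chromatic_number V E > 3}"

end

theory Submission
  imports Defs
begin

fun conjs :: "epfm \<Rightarrow> epfm list \<Rightarrow> epfm" where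
  "conjs T [] = T" | "conjs T (p#ps) = Conj p (conjs T ps)"

fun exs :: "nat list \<Rightarrow> epfm \<Rightarrow> epfm" where
  "exs [] p = p" | "exs (x#xs) p = Ex x (exs xs p)"

lemma sat_conjs: "sat V E s (conjs T ps) = (sat V E s T \<and> (\<forall>p\<in>set ps. sat V E s p))"
  by (induction ps) auto

lemma vars_conjs: "vars (conjs T ps) = vars T \<union> \<Union>(vars ` set ps)"
  by (induction ps) auto

lemma fvars_conjs: "fvars (conjs T ps) = fvars T \<union> \<Union>(fvars ` set ps)"
  by (induction ps) auto

lemma vars_exs: "vars (exs xs p) = set xs \<union> vars p"
  by (induction xs) auto

lemma fvars_exs: "fvars (exs xs p) = fvars p - set xs"
  by (induction xs) auto

lemma sat_exs_intro:
  "(\<forall>x\<in>set xs. t x \<in> V) \<Longrightarrow> sat V E (\<lambda>x. if x \<in> set xs then t x else s x) p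
   \<Longrightarrow> sat V E s (exs xs p)"
proof (induction xs arbitrary: s)
  case Nil then show ?case by simp
next
  case (Cons x xs)
  have eq: "(\<lambda>z. if z \<in> set xs then t z else (s(x := t x)) z)
      = (\<lambda>z. if z \<in> set (x#xs) then t z else s z)" by auto
  have "sat V E (\<lambda>z. if z \<in> set xs then t z else (s(x := t x)) z) p"
    using Cons.prems(2) eq by simp
  moreover have "\<forall>z\<in>set xs. t z \<in> V" using Cons.prems(1) by simp
  ultimately have "sat V E (s(x := t x)) (exs xs p)"
    using Cons.IH[of "s(x := t x)"] by blast
  then show ?case using Cons.prems by auto
qed

lemma sat_exs_elim:
  "sat V E s (exs xs p) \<Longrightarrow> \<exists>s'. (\<forall>x. x \<notin> set xs \<longrightarrow> s' x = s x) \<and>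
     (\<forall>x\<in>set xs. s' x \<in> V) \<and> sat V E s' p"
proof (induction xs arbitrary: s)
  case Nil then show ?case by auto
next
  case (Cons x xs)
  then obtain a where a: "a \<in> V" "sat V E (s(x := a)) (exs xs p)" by auto
  from Cons.IH[OF a(2)] obtain s' where s': "\<forall>z. z \<notin> set xs \<longrightarrow> s' z = (s(x := a)) z"
     "\<forall>z\<in>set xs. s' z \<in> V" "sat V E s' p" by blast
  show ?case
    apply (rule exI[of _ s'])
    using s' a(1) by (auto split: if_splits)
qed

lemma key:
  fixes E :: "nat \<Rightarrow> nat \<Rightarrow> bool" and A I V :: "nat set" and y :: nat
  assumes fin: "finite A" "finite I" and y: "y \<notin> A" and sub: "A \<subseteq> V" "I \<subseteq> V"
    and indep: "\<forall>x\<in>I. \<forall>z\<in>I. \<not> E x z"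
    and sym: "\<forall>x z. E x z \<longrightarrow> E z x"
    and nocol: "\<not> (\<exists>c. proper_colouring (A \<union> I) E 3 c)"
  shows "\<exists>p. sentence p \<and> card (vars p) \<le> card A + 1 \<and> holds V E p \<and> \<not> holds K3_V K3_E p"
proof -
  define as where "as = sorted_list_of_set A"
  define iss where "iss = sorted_list_of_set I"
  have sas: "set as = A" using fin by (simp add: as_def)
  have sis: "set iss = I" using fin by (simp add: iss_def)
  define TT where "TT = Ex y (Eq y y)"
  define edg where "edg = conjs TT [Adj u w. u \<leftarrow> as, w \<leftarrow> as, E u w]"
  define phi where "phi = (\<lambda>v. Ex y (conjs (Eq y y) [Adj u y. u \<leftarrow> as, E u v]))"
  define body where "body = Conj edg (conjs TT (map phi iss))"
  define psi where "psi = exs as body"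
  have "A \<union> I \<noteq> {}"
  proof
    assume "A \<union> I = {}"
    then have "proper_colouring (A \<union> I) E 3 (\<lambda>_. 0)" by (simp add: proper_colouring_def)
    then show False using nocol by blast
  qed
  then have Vne: "V \<noteq> {}" using sub by auto
  have vb: "vars body \<subseteq> A \<union> {y}"
    unfolding body_def edg_def phi_def TT_def using sas
    by (auto simp: vars_conjs)
  have vp: "vars psi \<subseteq> insert y A" unfolding psi_def using vb sas by (auto simp: vars_exs)
  have cv: "card (vars psi) \<le> card A + 1"
  proof -
    have "card (vars psi) \<le> card (insert y A)" using vp fin by (intro card_mono) auto
    also have "\<dots> = card A + 1" using y fin by simp
    finally show ?thesis .
  qed
  have fb: "fvars body \<subseteq> A"
    unfolding body_def edg_def phi_def TT_def using sas
    by (auto simp: fvars_conjs)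
  have sent: "sentence psi" unfolding sentence_def psi_def using fb sas by (auto simp: fvars_exs)
  have hG: "holds V E psi"
    unfolding holds_def
  proof (intro allI impI)
    fix s :: "nat \<Rightarrow> nat" assume s: "\<forall>x. s x \<in> V"
    let ?s' = "\<lambda>x. if x \<in> set as then x else s x"
    have TTs: "sat V E s' TT" for s' using Vne by (auto simp: TT_def)
    have "sat V E ?s' body"
      unfolding body_def
    proof (simp, intro conjI)
      show "sat V E ?s' edg" unfolding edg_def using TTs sas
        by (auto simp: sat_conjs)
      show "sat V E ?s' (conjs TT (map phi iss))"
      proof (simp add: sat_conjs TTs, intro ballI)
        fix v assume v: "v \<in> set iss"
        then have vV: "v \<in> V" using sis sub by auto
        have "sat V E (?s'(y := v)) (conjs (Eq y y) [Adj u y. u \<leftarrow> as, E u v])"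
          using sas y by (auto simp: sat_conjs)
        then show "sat V E ?s' (phi v)" unfolding phi_def using vV by auto
      qed
    qed
    then show "sat V E s psi" unfolding psi_def
      by (intro sat_exs_intro[where t = "\<lambda>x. x"]) (use sas sub in auto)
  qed
  have nK: "\<not> holds K3_V K3_E psi"
  proof
    assume h: "holds K3_V K3_E psi"
    have "sat K3_V K3_E (\<lambda>_. 0) psi" using h unfolding holds_def by (auto simp: K3_V_def)
    then obtain s' where s': "\<forall>x\<in>set as. s' x \<in> K3_V" "sat K3_V K3_E s' body"
      unfolding psi_def using sat_exs_elim by blast
    have ed: "\<forall>u\<in>A. \<forall>w\<in>A. E u w \<longrightarrow> K3_E (s' u) (s' w)"
      using s'(2) sas unfolding body_def edg_def by (auto simp: sat_conjs)
    have ph: "\<forall>v\<in>I. \<exists>a\<in>K3_V. \<forall>u\<in>A. E u v \<longrightarrow> K3_E (s' u) a"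
    proof
      fix v assume "v \<in> I"
      then have "sat K3_V K3_E s' (phi v)" using s'(2) sis unfolding body_def by (auto simp: sat_conjs)
      then obtain a where a: "a \<in> K3_V"
        "sat K3_V K3_E (s'(y := a)) (conjs (Eq y y) [Adj u y. u \<leftarrow> as, E u v])"
        unfolding phi_def by auto
      have "\<forall>u\<in>A. E u v \<longrightarrow> K3_E (s' u) a"
      proof (intro ballI impI)
        fix u assume u: "u \<in> A" "E u v"
        then have "sat K3_V K3_E (s'(y := a)) (Adj u y)" using a(2) sas by (auto simp: sat_conjs)
        then show "K3_E (s' u) a" using u y by (auto split: if_splits)
      qed
      then show "\<exists>a\<in>K3_V. \<forall>u\<in>A. E u v \<longrightarrow> K3_E (s' u) a" using a(1) by blast
    qed
    then obtain f where f: "\<forall>v\<in>I. f v \<in> K3_V \<and> (\<forall>u\<in>A. E u v \<longrightarrow> K3_E (s' u) (f v))"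
      by metis
    define c where "c = (\<lambda>x. if x \<in> A then s' x else f x)"
    have "proper_colouring (A \<union> I) E 3 c"
      unfolding proper_colouring_def
    proof (intro conjI ballI impI)
      fix x assume "x \<in> A \<union> I"
      then show "c x < 3" using s'(1) f sas unfolding c_def K3_V_def by auto
    next
      fix x z assume xz: "x \<in> A \<union> I" "z \<in> A \<union> I" "E x z"
      show "c x \<noteq> c z"
      proof (cases "x \<in> A")
        case True
        show ?thesis
        proof (cases "z \<in> A")
          case True then show ?thesis using ed xz \<open>x \<in> A\<close> by (auto simp: c_def K3_E_def)
        next
          case False then show ?thesis using f xz \<open>x \<in> A\<close> by (auto simp: c_def K3_E_def)
        qed
      next
        case False
        show ?thesis
        proof (cases "z \<in> A")
          case True
          have "E z x" using sym xz(3) by blast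
          moreover have "x \<in> I" using xz(1) \<open>x \<notin> A\<close> by blast
          ultimately have "K3_E (s' z) (f x)" using f True by blast
          then show ?thesis using True \<open>x \<notin> A\<close> by (auto simp: c_def K3_E_def)
        next
          case False then show ?thesis using indep xz \<open>x \<notin> A\<close> by auto
        qed
      qed
    qed
    then show False using nocol by blast
  qed
  show ?thesis using sent cv hG nK by blast
qed


lemma no3col:
  assumes "chromatic_number V E > 3" shows "\<not> proper_colouring V E 3 c"
proof
  assume "proper_colouring V E 3 c"
  then have "chromatic_number V E \<le> 3" unfolding chromatic_number_def by (blast intro: Least_le)
  then show False using assms by simp
qed

lemma col_small:
  assumes "finite H" "card H \<le> 3" "\<forall>x. \<not> E x x"
  shows "\<exists>c. proper_colouring H E 3 c"
proof -
  obtain f :: "'a \<Rightarrow> nat" where f: "f ` H \<subseteq> {..<3}" "inj_on f H"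
    using card_le_inj[of H "{..<3::nat}"] assms by auto
  have "proper_colouring H E 3 f" unfolding proper_colouring_def
    using f assms(3) by (auto simp: inj_on_def)
  then show ?thesis by blast
qed

lemma Wbound:
  fixes E :: "nat \<Rightarrow> nat \<Rightarrow> bool"
  assumes sg: "simple_graph {..<n} E" and chi: "chromatic_number {..<n} E > 3"
  shows "4 * W_graph {..<n} E \<le> 3 * n + 4"
proof -
  let ?V = "{..<n}"
  let ?P = "\<lambda>H. \<not> (\<exists>c. proper_colouring H E 3 c)"
  have irr: "\<forall>x. \<not> E x x" and sym: "\<forall>x z. E x z \<longrightarrow> E z x" using sg by (auto simp: simple_graph_def)
  have PV: "?P ?V" using no3col[OF chi] by blast
  have finS: "finite {H. H \<subseteq> ?V \<and> ?P H}"
  proof (rule finite_subset[of _ "Pow ?V"])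
    show "{H. H \<subseteq> ?V \<and> ?P H} \<subseteq> Pow ?V" by blast
  qed simp
  have neS: "{H. H \<subseteq> ?V \<and> ?P H} \<noteq> {}" using PV by blast
  obtain H where H: "H \<in> {H. H \<subseteq> ?V \<and> ?P H}"
    and Hmin: "\<not> (\<exists>x\<in>{H. H \<subseteq> ?V \<and> ?P H}. x < H)"
    using ex_min_if_finite[OF finS neS] by blast
  have HV: "H \<subseteq> ?V" and PH: "?P H" using H by simp_all
  have finH: "finite H" using finite_subset[OF HV] by simp
  have h4: "card H \<ge> 4"
  proof (rule ccontr)
    assume "\<not> card H \<ge> 4"
    then have "card H \<le> 3" by simp
    from col_small[of H E, OF finH this irr] PH show False by blast
  qed
  then have "H \<noteq> {}" by auto
  then obtain v where v: "v \<in> H" by blast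
  have "\<not> ?P (H - {v})"
  proof
    assume P: "?P (H - {v})"
    have "H - {v} \<subseteq> ?V" using HV by blast
    then have mem: "H - {v} \<in> {H. H \<subseteq> ?V \<and> ?P H}" using P by simp
    have "H - {v} < H" using v by blast
    then show False using Hmin mem by blast
  qed
  then obtain c where c: "proper_colouring (H - {v}) E 3 c" by blast
  define C where "C = (\<lambda>i. {u \<in> H - {v}. c u = i})"
  have finC: "finite (C i)" for i using finH by (simp add: C_def)
  have "H - {v} \<subseteq> C 0 \<union> C 1 \<union> C 2"
  proof
    fix x assume x: "x \<in> H - {v}"
    then have "c x < 3" using c unfolding proper_colouring_def by blast
    then have "c x = 0 \<or> c x = 1 \<or> c x = 2" by linarith
    then show "x \<in> C 0 \<union> C 1 \<union> C 2" using x unfolding C_def by blast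
  qed
  then have "card (H - {v}) \<le> card (C 0 \<union> C 1 \<union> C 2)" using finC by (intro card_mono) auto
  also have "\<dots> \<le> card (C 0 \<union> C 1) + card (C 2)" by (rule card_Un_le)
  also have "\<dots> \<le> card (C 0) + card (C 1) + card (C 2)"
    using card_Un_le[of "C 0" "C 1"] by simp
  finally have sumc: "card H - 1 \<le> card (C 0) + card (C 1) + card (C 2)" using v finH by simp
  obtain i where i: "card H - 1 \<le> 3 * card (C i)"
  proof -
    consider "card (C 1) \<le> card (C 0) \<and> card (C 2) \<le> card (C 0)"
      | "card (C 0) \<le> card (C 1) \<and> card (C 2) \<le> card (C 1)"
      | "card (C 0) \<le> card (C 2) \<and> card (C 1) \<le> card (C 2)" by linarith
    then show ?thesis
    proof cases
      case 1 then show ?thesis using sumc that[of 0] by linarith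
    next
      case 2 then show ?thesis using sumc that[of 1] by linarith
    next
      case 3 then show ?thesis using sumc that[of 2] by linarith
    qed
  qed
  define I where "I = C i"
  define A where "A = H - I"
  have IH: "I \<subseteq> H" by (auto simp: I_def C_def)
  have indep: "\<forall>x\<in>I. \<forall>z\<in>I. \<not> E x z" using c unfolding I_def C_def proper_colouring_def by fastforce
  have AI: "A \<union> I = H" using IH by (auto simp: A_def)
  have cardA: "card A = card H - card I" using IH finH by (simp add: A_def card_Diff_subset finite_subset)
  have cIH: "card I \<le> card H" using card_mono[OF finH IH] .
  have cHn: "card H \<le> n" using HV card_mono[of ?V H] by simp
  have "\<exists>p. sentence p \<and> card (vars p) \<le> card A + 1 \<and> holds ?V E p \<and> \<not> holds K3_V K3_E p"
  proof (rule key[where y = n])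
    show "finite A" using finH by (simp add: A_def)
    show "finite I" using finite_subset[OF IH finH] .
    show "n \<notin> A" using HV by (auto simp: A_def)
    show "A \<subseteq> ?V" using HV by (auto simp: A_def)
    show "I \<subseteq> ?V" using HV IH by blast
    show "\<forall>x\<in>I. \<forall>z\<in>I. \<not> E x z" by (rule indep)
    show "\<forall>x z. E x z \<longrightarrow> E z x" by (rule sym)
    show "\<not> (\<exists>c. proper_colouring (A \<union> I) E 3 c)" using PH AI by simp
  qed
  then obtain p where p: "sentence p" "card (vars p) \<le> card A + 1" "holds ?V E p" "\<not> holds K3_V K3_E p"
    by blast
  have "W_graph ?V E \<le> card (vars p)" unfolding W_graph_def
    by (rule Least_le) (rule exI[of _ p], use p in simp)
  then show ?thesis using p(2) cardA i h4 cIH cHn unfolding I_def by linarith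
qed

lemma K4_exists:
  fixes n :: nat
  assumes "n \<ge> 4"
  shows "\<exists>E. simple_graph {..<n} E \<and> chromatic_number {..<n} E > (3::nat)"
proof -
  define E where "E = (\<lambda>x y::nat. x < 4 \<and> y < 4 \<and> x \<noteq> y)"
  have sg: "simple_graph {..<n} E" using assms by (auto simp: simple_graph_def E_def)
  have ex: "\<exists>c. proper_colouring {..<n} E n c"
    by (rule exI[of _ "\<lambda>x. x"]) (auto simp: proper_colouring_def E_def)
  have "chromatic_number {..<n} E > 3"
  proof (rule ccontr)
    assume "\<not> ?thesis"
    then have k: "chromatic_number {..<n} E \<le> 3" by simp
    obtain c where c: "proper_colouring {..<n} E (chromatic_number {..<n} E) c"
      unfolding chromatic_number_def using LeastI_ex[of "\<lambda>k. \<exists>c. proper_colouring {..<n} E k c"] ex by blast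
    have "inj_on c {..<4}"
    proof (rule inj_onI, rule ccontr)
      fix x y assume xy: "x \<in> {..<4::nat}" "y \<in> {..<4::nat}" "c x = c y" "x \<noteq> y"
      then have "E x y" "x \<in> {..<n}" "y \<in> {..<n}" using assms by (auto simp: E_def)
      then have "c x \<noteq> c y" using c unfolding proper_colouring_def by blast
      then show False using xy by simp
    qed
    moreover have "c ` {..<4} \<subseteq> {..<3}"
    proof
      fix z assume "z \<in> c ` {..<4::nat}"
      then obtain x where x: "x < 4" "z = c x" by auto
      then have "x \<in> {..<n}" using assms by simp
      then have "c x < chromatic_number {..<n} E" using c unfolding proper_colouring_def by blast
      then show "z \<in> {..<3}" using x k by simp
    qed
    ultimately have "card {..<4::nat} \<le> card {..<3::nat}" by (intro card_inj_on_le) auto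
    then show False by simp
  qed
  then show ?thesis using sg by blast
qed

theorem corollary3:
  fixes n :: nat
  assumes "n \<ge> 4"
  shows "real (W_num n) \<le> 3 / 4 * real n + 1"
proof -
  let ?S = "{W_graph V E | V E. V = {..<n} \<and> simple_graph V E \<and> chromatic_number V E > 3}"
  have bd: "\<forall>w\<in>?S. 4 * w \<le> 3 * n + 4" using Wbound by blast
  have fin: "finite ?S"
  proof (rule finite_subset[of _ "{..3 * n + 4}"])
    show "?S \<subseteq> {..3 * n + 4}"
    proof
      fix w assume "w \<in> ?S"
      then have "4 * w \<le> 3 * n + 4" using bd by blast
      then show "w \<in> {..3 * n + 4}" by simp
    qed
  qed simp
  have ne: "?S \<noteq> {}" using K4_exists[OF assms] by blast
  have "W_num n \<in> ?S" unfolding W_num_def using Max_in[OF fin ne] by simp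
  then have "4 * W_num n \<le> 3 * n + 4" using bd by blast
  then have "4 * real (W_num n) \<le> 3 * real n + 4" by linarith
  then show ?thesis by simp
qed

end
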